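(* Let $d\ge1$, $\beta\in[0,1]$, $0<\lambda<\Lambda$, $T>0$, $\delta,\tau,r\in(0,1]$ and $(x_0,v_0)\in\mathbb{T}^d\times\mathbb{R}^d$. Let $h$ be a classical solution with $0\le h\le\Lambda$ of \[ (\partial_t+v\cdot\nabla_x)h=\mathscr{R}_h(t,x)\,(\nabla_v-v)\cdot\nabla_vh,\qquad \mathscr{R}_h=\Big(\int_{\mathbb{R}^d}h\,d\mu\Big)^\beta, \] in $(0,T]\times\mathbb{T}^d\times\mathbb{R}^d$ with $h(0,x,v)\ge\delta\mathbb{1}_{\{|x-x_0|<r,\,|v-v_0|<r/\tau\}}$. Then there is a constant $c_0>0$ depending only on $d,\beta,\lambda,\Lambda$ such that $h\ge\frac\delta8\mathbb{1}_{\mathcal{P}}$, where \[ \mathcal{P}=\Big\{(t,x,v):\ t\le\min\{T,\tau,c_0\langle\tau r^{-1}\rangle^{-2}\langle v_0\rangle^{-2}\},\ |x-x_0-tv|<\tfrac r2,\ |v-v_0|<\tfrac{r}{2\tau}\Big\}. \]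
   Context: $\langle y\rangle=(1+|y|^2)^{1/2}$; $\mathbb{T}^d$ is the unit-volume torus with its distance; $d\mu=(2\pi)^{-d/2}e^{-|v|^2/2}dv$. A classical solution is nonnegative, satisfies the equation pointwise and matches the initial data continuously. *)

theory Defs
  imports "HOL-Analysis.Analysis"
begin

text \<open>Points of the unit-volume torus are represented by points of the Euclidean space;
  integer lattice vectors:\<close>
definition int_vec :: "real^'n \<Rightarrow> bool" where
  "int_vec k \<longleftrightarrow> (\<forall>i. k $ i \<in> \<int>)"

definition torus_dist :: "real^'n \<Rightarrow> real^'n \<Rightarrow> real" where
  "torus_dist x y = (INF k \<in> {k. int_vec k}. norm (x - y - k))"

definition jbr :: "real \<Rightarrow> real" where
  "jbr y = sqrt (1 + y\<^sup>2)"

definition gauss :: "real^'n \<Rightarrow> real" where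
  "gauss v = (2 * pi) powr (- real CARD('n) / 2) * exp (- (norm v)\<^sup>2 / 2)"

definition mu_mass :: "(real \<Rightarrow> real^'n \<Rightarrow> real^'n \<Rightarrow> real) \<Rightarrow> real \<Rightarrow> real^'n \<Rightarrow> real" where
  "mu_mass h t x = (\<integral>v. h t x v * gauss v \<partial>lborel)"

text \<open>Diffusion coefficient R_h = (int h dmu)^beta, with the convention y^0 = 1.\<close>
definition Rcoef :: "real \<Rightarrow> (real \<Rightarrow> real^'n \<Rightarrow> real^'n \<Rightarrow> real) \<Rightarrow> real \<Rightarrow> real^'n \<Rightarrow> real" where
  "Rcoef \<beta> h t x = (if \<beta> = 0 then 1 else (mu_mass h t x) powr \<beta>)"

text \<open>Classical solution on (0,T] x T^d x R^d (functions periodic in x): nonnegative,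
  jointly continuous on [0,T] x T^d x R^d (so it matches the initial datum h(0,.,.) continuously),
  and the equation
   d_t h + v . grad_x h = R_h (Delta_v h - v . grad_v h)
  holds pointwise, with pointwise (Frechet) derivatives.\<close>
definition classical_solution ::
  "real \<Rightarrow> real \<Rightarrow> (real \<Rightarrow> real^'n \<Rightarrow> real^'n \<Rightarrow> real) \<Rightarrow> bool" where
  "classical_solution \<beta> T h \<longleftrightarrow>
     (\<forall>t x v k. int_vec k \<longrightarrow> h t (x + k) v = h t x v) \<and>
     (\<forall>t\<in>{0..T}. \<forall>x v. 0 \<le> h t x v) \<and>
     continuous_on ({0..T} \<times> UNIV \<times> UNIV) (\<lambda>(t, x, v). h t x v) \<and>
     (\<exists>ht gx gv Hv. \<forall>t\<in>{0<..T}. \<forall>x v.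
        ((\<lambda>s. h s x v) has_real_derivative ht t x v) (at t within {0..T}) \<and>
        ((\<lambda>y. h t y v) has_derivative (\<lambda>y. gx t x v \<bullet> y)) (at x) \<and>
        ((\<lambda>w. h t x w) has_derivative (\<lambda>w. gv t x v \<bullet> w)) (at v) \<and>
        ((\<lambda>w. gv t x w) has_derivative Hv t x v) (at v) \<and>
        ht t x v + v \<bullet> gx t x v =
          Rcoef \<beta> h t x * ((\<Sum>i\<in>UNIV. Hv t x v (axis i 1) $ i) - v \<bullet> gv t x v))"

end

theory Submission
  imports Defs "HOL-Probability.Distributions"
begin


lemma exp_nn_fin: "(\<integral>\<^sup>+x. ennreal (exp (- x\<^sup>2 / 2)) \<partial>lborel) < \<infinity>"
proof -
  have "integrable lborel (\<lambda>x. sqrt (2*pi) * std_normal_density x)"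
    by simp
  moreover have "(\<lambda>x. sqrt (2*pi) * std_normal_density x) = (\<lambda>x::real. exp (- x\<^sup>2 / 2))"
    by (auto simp: std_normal_density_def)
  ultimately have "integrable lborel (\<lambda>x::real. exp (- x\<^sup>2 / 2))" by simp
  then show ?thesis
    by (simp add: integrable_iff_bounded)
qed

lemma gauss_integrable: "integrable lborel (gauss :: real^'n \<Rightarrow> real)"
proof -
  have eq: "exp (- (norm v)\<^sup>2 / 2) = (\<Prod>b\<in>Basis. exp (- (v \<bullet> b)\<^sup>2 / 2))" for v :: "real^'n"
  proof -
    have "(norm v)\<^sup>2 = (\<Sum>b\<in>Basis. (v \<bullet> b)\<^sup>2)"
      by (subst power2_norm_eq_inner, subst euclidean_inner) (simp add: power2_eq_square)
    then have "- (norm v)\<^sup>2 / 2 = (\<Sum>b\<in>Basis. - (v \<bullet> b)\<^sup>2 / 2)"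
      by (simp add: sum_divide_distrib sum_negf)
    then show ?thesis by (simp add: exp_sum)
  qed
  have "(\<integral>\<^sup>+v. ennreal (exp (- (norm (v::real^'n))\<^sup>2 / 2)) \<partial>lborel)
        = (\<integral>\<^sup>+v. (\<Prod>b\<in>(Basis::(real^'n) set). ennreal (exp (- (v \<bullet> b)\<^sup>2 / 2))) \<partial>lborel)"
    apply (rule nn_integral_cong)
    apply (subst eq)
    apply (rule prod_ennreal[symmetric])
    by simp
  also have "\<dots> = (\<Prod>b\<in>(Basis::(real^'n) set). (\<integral>\<^sup>+x. ennreal (exp (- x\<^sup>2 / 2)) \<partial>lborel))"
    by (rule nn_integral_lborel_prod) auto
  also have "\<dots> < \<infinity>"
    using exp_nn_fin by (simp add: power_less_top_ennreal)
  finally have fin: "(\<integral>\<^sup>+v. ennreal (exp (- (norm (v::real^'n))\<^sup>2 / 2)) \<partial>lborel) < \<infinity>" .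
  have "integrable lborel (\<lambda>v::real^'n. exp (- (norm v)\<^sup>2 / 2))"
    using fin by (intro integrableI_bounded) auto
  then show ?thesis unfolding gauss_def[abs_def] by simp
qed


definition psi :: "real \<Rightarrow> real \<Rightarrow> real \<Rightarrow> real \<Rightarrow> real^'n \<Rightarrow> real^'n \<Rightarrow> real \<Rightarrow> real^'n \<Rightarrow> real^'n \<Rightarrow> real" where
  "psi \<delta> \<kappa> \<tau> r x0 v0 s y w = \<delta> * (1 - ((y - x0 - s *\<^sub>R w) \<bullet> (y - x0 - s *\<^sub>R w)) / r\<^sup>2
      - \<tau>\<^sup>2 * ((w - v0) \<bullet> (w - v0)) / r\<^sup>2 - \<kappa> * s)"

lemma psi_dt: assumes r: "r \<noteq> 0" shows "((\<lambda>s. psi \<delta> \<kappa> \<tau> r x0 v0 s y w) has_real_derivative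
   \<delta> * (2 * ((y - x0 - s *\<^sub>R w) \<bullet> w) / r\<^sup>2 - \<kappa>)) (at s within X)"
  unfolding psi_def
  using r apply (auto intro!: derivative_eq_intros simp: inner_add_right inner_diff_right inner_add_left inner_diff_left inner_scaleR_right inner_scaleR_left inner_commute power2_eq_square)
  by (simp add: field_simps)
  
lemma psi_dx: assumes r: "r \<noteq> 0" shows "((\<lambda>y. psi \<delta> \<kappa> \<tau> r x0 v0 s y w) has_derivative
   (\<lambda>u. ((-2*\<delta>/r\<^sup>2) *\<^sub>R (y - x0 - s *\<^sub>R w)) \<bullet> u)) (at y)"
  unfolding psi_def
  using r by (auto intro!: derivative_eq_intros ext simp: inner_add_right inner_diff_right inner_add_left inner_diff_left inner_scaleR_right inner_scaleR_left inner_commute power2_eq_square)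

lemma psi_dv: assumes r: "r \<noteq> 0" shows "((\<lambda>w. psi \<delta> \<kappa> \<tau> r x0 v0 s y w) has_derivative
   (\<lambda>u. (\<delta> *\<^sub>R ((2 * s / r\<^sup>2) *\<^sub>R (y - x0 - s *\<^sub>R w) - (2 * \<tau>\<^sup>2 / r\<^sup>2) *\<^sub>R (w - v0))) \<bullet> u)) (at w)"
  unfolding psi_def
  using r apply (auto intro!: derivative_eq_intros ext simp: inner_add_right inner_diff_right inner_add_left inner_diff_left inner_scaleR_right inner_scaleR_left inner_commute power2_eq_square)
  by (simp add: field_simps)

lemma psi_dvv: "((\<lambda>w::real^'n. \<delta> *\<^sub>R ((2 * s / r\<^sup>2) *\<^sub>R (y - x0 - s *\<^sub>R w) - (2 * \<tau>\<^sup>2 / r\<^sup>2) *\<^sub>R (w - v0)))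
   has_derivative (\<lambda>u. (-2*\<delta>*(s\<^sup>2+\<tau>\<^sup>2)/r\<^sup>2) *\<^sub>R u)) (at w)"
  apply (auto intro!: derivative_eq_intros ext)
  apply (simp add: scaleR_diff_right power2_eq_square vec_eq_iff)
  by (simp add: diff_divide_distrib[symmetric] algebra_simps)



lemma time_min:
  fixes f :: "real \<Rightarrow> real"
  assumes d: "(f has_real_derivative D) (at t within {0..T})" and t: "0 < t" "t \<le> T"
    and m: "\<And>s. 0 \<le> s \<Longrightarrow> s \<le> t \<Longrightarrow> f t \<le> f s"
  shows "D \<le> 0"
proof (rule ccontr)
  assume "\<not> D \<le> 0"
  then obtain e where e: "e > 0" "\<And>h. h > 0 \<Longrightarrow> t - h \<in> {0..T} \<Longrightarrow> h < e \<Longrightarrow> f (t - h) < f t"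
    using has_real_derivative_pos_inc_left[OF d] by force
  define h where "h = min e t / 2"
  have "h > 0" "h < e" "t - h \<in> {0..T}" using e t by (auto simp: h_def)
  then have "f (t - h) < f t" using e by blast
  moreover have "f t \<le> f (t - h)" using m \<open>h > 0\<close> \<open>t - h \<in> {0..T}\<close> by auto
  ultimately show False by simp
qed

lemma second_order_1d:
  fixes \<phi> g :: "real \<Rightarrow> real"
  assumes d1: "\<And>s. (\<phi> has_real_derivative g s) (at s)"
    and d2: "(g has_real_derivative c) (at 0)" and g0: "g 0 = 0"
    and e: "e > 0" and m: "\<And>s. \<bar>s\<bar> < e \<Longrightarrow> \<phi> 0 \<le> \<phi> s"
  shows "0 \<le> c"
proof (rule ccontr)
  assume "\<not> 0 \<le> c"
  then obtain d where d: "d > 0" "\<And>h. h > 0 \<Longrightarrow> h < d \<Longrightarrow> g (0 + h) < g 0"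
    using has_real_derivative_neg_dec_right[OF d2] by force
  define s where "s = min d e / 2"
  have s: "s > 0" "s < d" "s < e" using d e by (auto simp: s_def)
  obtain z where z: "z > 0" "z < s" "\<phi> s - \<phi> 0 = (s - 0) * g z"
    using MVT2[of 0 s \<phi> g] s d1 by (auto simp: DERIV_def)
  have "g z < 0" using d(2)[of z] z s g0 by simp
  then have "s * g z < 0" using s by (simp add: mult_pos_neg)
  then have "\<phi> s < \<phi> 0" using z by simp
  moreover have "\<phi> 0 \<le> \<phi> s" using m s by simp
  ultimately show False by simp
qed

lemma grad_zero_local_min:
  fixes F :: "real^'n \<Rightarrow> real"
  assumes "(F has_derivative (\<lambda>u. g \<bullet> u)) (at v)" and m: "eventually (\<lambda>w. F v \<le> F w) (nhds v)"
  shows "g = 0"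
proof -
  obtain e where e: "e > 0" "\<And>w. dist w v < e \<Longrightarrow> F v \<le> F w"
    using m unfolding eventually_nhds_metric by (auto simp: dist_commute)
  have "eventually (\<lambda>w. F v \<le> F w) (at v)"
    unfolding eventually_at using e by auto
  then have "(\<lambda>u. g \<bullet> u) = (\<lambda>u. 0)" using has_derivative_local_min[OF assms(1)] by blast
  then have "g \<bullet> g = 0" by metis
  then show ?thesis by simp
qed

lemma hessian_trace_nonneg:
  fixes F :: "real^'n \<Rightarrow> real" and G :: "real^'n \<Rightarrow> real^'n"
  assumes dF: "\<And>w. (F has_derivative (\<lambda>u. G w \<bullet> u)) (at w)"
    and dG: "(G has_derivative H) (at v)"
    and m: "eventually (\<lambda>w. F v \<le> F w) (nhds v)"
  shows "0 \<le> H (axis i 1) $ i"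
proof -
  define ei :: "real^'n" where "ei = axis i 1"
  have G0: "G v = 0" using grad_zero_local_min[OF dF m] .
  obtain e where e: "e > 0" "\<And>w. dist w v < e \<Longrightarrow> F v \<le> F w"
    using m unfolding eventually_nhds_metric by (auto simp: dist_commute)
  have nei: "norm ei = 1" by (simp add: ei_def)
  have d1: "((\<lambda>s. F (v + s *\<^sub>R ei)) has_real_derivative G (v + s *\<^sub>R ei) \<bullet> ei) (at s)" for s
  proof -
    have "((\<lambda>s. F (v + s *\<^sub>R ei)) has_derivative (\<lambda>u. G (v + s *\<^sub>R ei) \<bullet> (u *\<^sub>R ei))) (at s)"
      by (rule has_derivative_compose[where f="\<lambda>s. v + s *\<^sub>R ei", OF _ dF])
         (auto intro!: derivative_eq_intros)
    then show ?thesis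
      unfolding has_field_derivative_def
      by (rule has_derivative_eq_rhs) (auto simp: fun_eq_iff mult.commute)
  qed
  have d2: "((\<lambda>s. G (v + s *\<^sub>R ei) \<bullet> ei) has_real_derivative H ei \<bullet> ei) (at 0)"
  proof -
    have dG': "(G has_derivative H) (at (v + 0 *\<^sub>R ei))" using dG by simp
    have "((\<lambda>s. G (v + s *\<^sub>R ei)) has_derivative (\<lambda>u. H (u *\<^sub>R ei))) (at 0)"
      by (rule has_derivative_compose[where f="\<lambda>s. v + s *\<^sub>R ei", OF _ dG'])
         (auto intro!: derivative_eq_intros)
    then have "((\<lambda>s. G (v + s *\<^sub>R ei) \<bullet> ei) has_derivative (\<lambda>u. H (u *\<^sub>R ei) \<bullet> ei)) (at 0)"
      by (auto intro!: derivative_eq_intros)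
    moreover have "linear H" using dG has_derivative_linear by blast
    moreover have "(\<lambda>u. H (u *\<^sub>R ei) \<bullet> ei) = (*) (H ei \<bullet> ei)"
      using \<open>linear H\<close> by (auto simp: fun_eq_iff linear_scale mult.commute)
    ultimately show ?thesis
      unfolding has_field_derivative_def by simp
  qed
  have "0 \<le> H ei \<bullet> ei"
  proof (rule second_order_1d[OF d1 d2 _ e(1)])
    show "G (v + 0 *\<^sub>R ei) \<bullet> ei = 0" using G0 by simp
    fix s :: real assume "\<bar>s\<bar> < e"
    then show "F (v + 0 *\<^sub>R ei) \<le> F (v + s *\<^sub>R ei)"
      using e(2)[of "v + s *\<^sub>R ei"] nei by (simp add: dist_norm)
  qed
  then show ?thesis by (simp add: ei_def inner_axis)
qed

lemma Rcoef_bounds: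
  fixes h :: "real \<Rightarrow> real^'n \<Rightarrow> real^'n \<Rightarrow> real"
  assumes b: "0 \<le> \<beta>" "\<beta> \<le> 1" and hb: "\<And>v. 0 \<le> h t x v" "\<And>v. h t x v \<le> Lam"
  shows "0 \<le> Rcoef \<beta> h t x \<and> Rcoef \<beta> h t x \<le> max 1 (Lam * integral\<^sup>L lborel (gauss :: real^'n \<Rightarrow> real))"
proof -
  let ?G = "integral\<^sup>L lborel (gauss :: real^'n \<Rightarrow> real)"
  have gnn: "0 \<le> gauss v" for v :: "real^'n" by (simp add: gauss_def)
  have G0: "0 \<le> ?G" using gnn by (simp add: integral_nonneg_AE)
  have L0: "0 \<le> Lam" using hb[of 0] by linarith
  have m0: "0 \<le> mu_mass h t x" unfolding mu_mass_def
    using hb gnn by (intro integral_nonneg_AE) auto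
  have m1: "mu_mass h t x \<le> Lam * ?G"
  proof (cases "integrable lborel (\<lambda>v. h t x v * gauss v)")
    case True
    have "mu_mass h t x \<le> integral\<^sup>L lborel (\<lambda>v::real^'n. Lam * gauss v)"
      unfolding mu_mass_def
      by (rule integral_mono[OF True]) (auto intro: gauss_integrable mult_right_mono hb gnn)
    then show ?thesis by simp
  next
    case False
    then show ?thesis using G0 L0 by (simp add: mu_mass_def not_integrable_integral_eq)
  qed
  have "mu_mass h t x powr \<beta> \<le> max 1 (mu_mass h t x)"
  proof (cases "mu_mass h t x \<le> 1")
    case True
    then show ?thesis using m0 b powr_le1[of \<beta> "mu_mass h t x"] by auto
  next
    case False
    then have "mu_mass h t x powr \<beta> \<le> mu_mass h t x powr 1"
      using b by (intro powr_mono) auto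
    then show ?thesis using False by simp
  qed
  then show ?thesis using m0 m1 unfolding Rcoef_def by auto
qed



lemma td_le: "torus_dist x y \<le> norm (x - y)"
proof -
  have "int_vec (0::real^'a)" by (simp add: int_vec_def)
  then have "torus_dist x y \<le> norm (x - y - 0)" unfolding torus_dist_def
    by (intro cINF_lower) (auto intro: bdd_belowI[of _ 0])
  then show ?thesis by simp
qed

lemma td_lt: assumes "torus_dist x y < a" shows "\<exists>k. int_vec k \<and> norm (x - y - k) < a"
proof (rule ccontr)
  assume "\<not> ?thesis"
  then have "\<And>k. int_vec k \<Longrightarrow> a \<le> norm (x - y - k)" by force
  moreover have "int_vec (0::real^'a)" by (simp add: int_vec_def)
  ultimately have "a \<le> torus_dist x y" unfolding torus_dist_def
    by (intro cINF_greatest) auto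
  then show False using assms by simp
qed

lemma jbr_pow: "jbr y powr (-2) = 1 / (1 + y\<^sup>2)"
proof -
  have p: "0 < 1 + y\<^sup>2" by (simp add: add_pos_nonneg)
  have "jbr y powr (-2) = 1 / (jbr y powr 2)" unfolding jbr_def
    using p by (simp add: powr_minus divide_inverse)
  also have "jbr y powr 2 = 1 + y\<^sup>2" unfolding jbr_def using p
    by (simp add: powr_numeral)
  finally show ?thesis .
qed

lemma kappa_bound:
  fixes a b nn :: real
  assumes "0 \<le> a" "0 \<le> b" "0 \<le> nn"
  shows "4*nn*a\<^sup>2 + 4*a*b + 4 \<le> (4*nn+8) * ((1 + a\<^sup>2) * (1 + b\<^sup>2))"
proof -
  define P where "P = (1 + a\<^sup>2) * (1 + b\<^sup>2)"
  have P: "P = 1 + a\<^sup>2 + b\<^sup>2 + a\<^sup>2*b\<^sup>2" unfolding P_def by (simp add: algebra_simps)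
  have "0 \<le> a\<^sup>2*b\<^sup>2" by simp
  then have P1: "1 \<le> P" "a\<^sup>2 \<le> P" "a\<^sup>2 + b\<^sup>2 \<le> P" using P by (auto simp: add_nonneg_nonneg)
  have "2*a*b \<le> a\<^sup>2 + b\<^sup>2" using sum_squares_bound[of a b] by simp
  have "4*nn*a\<^sup>2 \<le> 4*nn*P" using P1 assms by (simp add: mult_left_mono)
  then show ?thesis using P1 \<open>2*a*b \<le> a\<^sup>2 + b\<^sup>2\<close> unfolding P_def[symmetric] by (simp add: algebra_simps)
qed



theorem lemma4p5:
  fixes \<beta> lam Lam :: real
  assumes "0 \<le> \<beta>" "\<beta> \<le> 1" "0 < lam" "lam < Lam"
  shows "\<exists>c0>0. \<forall>T \<delta> \<tau> r (x0 :: real^'n) (v0 :: real^'n) (h :: real \<Rightarrow> real^'n \<Rightarrow> real^'n \<Rightarrow> real).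
           0 < T \<longrightarrow> \<delta> \<in> {0<..1} \<longrightarrow> \<tau> \<in> {0<..1} \<longrightarrow> r \<in> {0<..1} \<longrightarrow>
           classical_solution \<beta> T h \<longrightarrow>
           (\<forall>t\<in>{0..T}. \<forall>x v. h t x v \<le> Lam) \<longrightarrow>
           (\<forall>x v. torus_dist x x0 < r \<and> norm (v - v0) < r / \<tau> \<longrightarrow> \<delta> \<le> h 0 x v) \<longrightarrow>
           (\<forall>t x v. 0 \<le> t \<and>
               t \<le> min T (min \<tau> (c0 * (jbr (\<tau> / r)) powr (-2) * (jbr (norm v0)) powr (-2))) \<and>
               torus_dist x (x0 + t *\<^sub>R v) < r / 2 \<and> norm (v - v0) < r / (2 * \<tau>)
             \<longrightarrow> \<delta> / 8 \<le> h t x v)"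
proof -
  define nn where "nn = real CARD('n)"
  define G where "G = integral\<^sup>L lborel (gauss :: real^'n \<Rightarrow> real)"
  define M where "M = max 1 (Lam * G)"
  define C where "C = M * (4*nn + 8) + 1"
  define c0 where "c0 = 3 / (8*C)"
  have nn0: "0 \<le> nn" by (simp add: nn_def)
  have M1: "1 \<le> M" by (simp add: M_def)
  have C0: "0 < C" using M1 nn0 by (simp add: C_def add_pos_nonneg)
  have c00: "0 < c0" using C0 by (simp add: c0_def)
  show ?thesis
  proof (rule exI[of _ c0], intro conjI allI impI)
    show "0 < c0" by (rule c00)
  next
    fix T \<delta> \<tau> r :: real and x0 v0 :: "real^'n" and h :: "real \<Rightarrow> real^'n \<Rightarrow> real^'n \<Rightarrow> real"
    fix t :: real and x v :: "real^'n"
    assume T: "0 < T" and \<delta>: "\<delta> \<in> {0<..1}" and \<tau>: "\<tau> \<in> {0<..1}" and r: "r \<in> {0<..1}"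
      and cs: "classical_solution \<beta> T h"
      and hL: "\<forall>t\<in>{0..T}. \<forall>x v. h t x v \<le> Lam"
      and init: "\<forall>x v. torus_dist x x0 < r \<and> norm (v - v0) < r / \<tau> \<longrightarrow> \<delta> \<le> h 0 x v"
      and A: "0 \<le> t \<and>
               t \<le> min T (min \<tau> (c0 * (jbr (\<tau> / r)) powr (-2) * (jbr (norm v0)) powr (-2))) \<and>
               torus_dist x (x0 + t *\<^sub>R v) < r / 2 \<and> norm (v - v0) < r / (2 * \<tau>)"
    have d0: "0 < \<delta>" and t0: "0 < \<tau>" "\<tau> \<le> 1" and r0: "0 < r" "r \<le> 1" using \<delta> \<tau> r by auto
    have tT: "t \<le> T" and tt: "t \<le> \<tau>" and t_ge: "0 \<le> t" using A by auto
    have tc: "t \<le> c0 * (jbr (\<tau> / r)) powr (-2) * (jbr (norm v0)) powr (-2)" using A by auto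
    have tx: "torus_dist x (x0 + t *\<^sub>R v) < r / 2" and tv: "norm (v - v0) < r / (2 * \<tau>)" using A by auto
    from cs have per: "\<And>t x v k. int_vec k \<Longrightarrow> h t (x + k) v = h t x v"
      and hnn: "\<And>t x v. t \<in> {0..T} \<Longrightarrow> 0 \<le> h t x v"
      and cont: "continuous_on ({0..T} \<times> UNIV \<times> UNIV) (\<lambda>(t, x, v). h t x v)"
      unfolding classical_solution_def by auto
    from cs obtain ht gx gv Hv where pde: "\<forall>t\<in>{0<..T}. \<forall>x v.
        ((\<lambda>s. h s x v) has_real_derivative ht t x v) (at t within {0..T}) \<and>
        ((\<lambda>y. h t y v) has_derivative (\<lambda>y. gx t x v \<bullet> y)) (at x) \<and>
        ((\<lambda>w. h t x w) has_derivative (\<lambda>w. gv t x v \<bullet> w)) (at v) \<and>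
        ((\<lambda>w. gv t x w) has_derivative Hv t x v) (at v) \<and>
        ht t x v + v \<bullet> gx t x v =
          Rcoef \<beta> h t x * ((\<Sum>i\<in>UNIV. Hv t x v (axis i 1) $ i) - v \<bullet> gv t x v)"
      unfolding classical_solution_def by blast
    have rne: "r \<noteq> 0" using r by auto
    have r2: "r / 2 < r" "r / (2 * \<tau>) < r / \<tau>" using r0 t0 by (auto simp: divide_strict_left_mono)
    show "\<delta> / 8 \<le> h t x v"
    proof (cases "t = 0")
      case True
      have "\<delta> \<le> h 0 x v"
        using init tx tv r2 True le_less_trans by auto
      then show ?thesis using True d0 by simp
    next
      case False
      then have tpos: "0 < t" using t_ge by simp
      show ?thesis
      proof (rule ccontr)
        assume neg: "\<not> \<delta> / 8 \<le> h t x v"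
        define P where "P = (1 + (\<tau>/r)\<^sup>2) * (1 + (norm v0)\<^sup>2)"
        have P1: "1 \<le> P" unfolding P_def
          using mult_mono[of 1 "1 + (\<tau>/r)\<^sup>2" 1 "1 + (norm v0)\<^sup>2"] by simp
        have tP: "t \<le> c0 / P" using tc by (simp add: jbr_pow P_def)
        define B' where "B' = 4*nn*\<tau>\<^sup>2/r\<^sup>2 + 4*\<tau>*norm v0/r + 4"
        define \<kappa> where "\<kappa> = M * B' + 1"
        have B'0: "0 \<le> B'" unfolding B'_def using nn0 t0 r0 by simp
        have B'P: "B' \<le> (4*nn+8) * P"
          using kappa_bound[of "\<tau>/r" "norm v0" nn] nn0 t0 r0
          by (simp add: B'_def P_def power_divide)
        have kP: "\<kappa> \<le> C * P"
        proof -
          have "M * B' \<le> M * ((4*nn+8) * P)" using B'P M1 by (simp add: mult_left_mono)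
          then show ?thesis unfolding \<kappa>_def C_def using P1 by (simp add: algebra_simps)
        qed
        have k0: "0 < \<kappa>" unfolding \<kappa>_def using M1 B'0 by (simp add: add_nonneg_pos)
        have kt: "\<kappa> * t \<le> 3/8"
        proof -
          have "\<kappa> * t \<le> (C * P) * (c0 / P)"
            using kP tP t_ge k0 by (intro mult_mono) auto
          also have "\<dots> = 3/8" using P1 C0 by (simp add: c0_def)
          finally show ?thesis .
        qed
        obtain k where k: "int_vec k" "norm (x - (x0 + t *\<^sub>R v) - k) < r / 2"
          using td_lt[OF tx] by blast
        define x' where "x' = x - k"
        have hx': "h t x' v = h t x v" using per[OF k(1), of t x' v] by (simp add: x'_def)
        have x'n: "norm (x' - x0 - t *\<^sub>R v) < r / 2" using k(2) by (simp add: x'_def algebra_simps)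
        define ps where "ps = psi \<delta> \<kappa> \<tau> r x0 v0"
        define Rx where "Rx = r + t * (norm v0 + r / \<tau>)"
        define S where "S = {0..t} \<times> (cball x0 Rx \<times> cball v0 (r / \<tau>))"
        define F where "F = (\<lambda>p. h (fst p) (fst (snd p)) (snd (snd p)) - ps (fst p) (fst (snd p)) (snd (snd p)))"
        have vb: "norm v \<le> norm v0 + r / \<tau>"
          using norm_triangle_ineq[of v0 "v - v0"] tv r2 by simp
        have x'S: "(t, x', v) \<in> S"
        proof -
          have "x' - x0 = (x' - x0 - t *\<^sub>R v) + t *\<^sub>R v" by simp
          then have "norm (x' - x0) \<le> norm (x' - x0 - t *\<^sub>R v) + t * norm v"
            using norm_triangle_ineq[of "x' - x0 - t *\<^sub>R v" "t *\<^sub>R v"] t_ge by simp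
          also have "\<dots> \<le> r + t * (norm v0 + r / \<tau>)"
            using x'n r2 vb t_ge by (intro add_mono mult_left_mono) auto
          finally show ?thesis unfolding S_def Rx_def using t_ge tv r2
            by (auto simp: dist_norm norm_minus_commute)
        qed
        have SD: "S \<subseteq> {0..T} \<times> UNIV \<times> UNIV" unfolding S_def using tT by auto
        have contF: "continuous_on S F"
        proof -
          have "continuous_on S (\<lambda>(t, x, v). h t x v)" using continuous_on_subset[OF cont SD] .
          moreover have "(\<lambda>(t, x, v). h t x v) = (\<lambda>p. h (fst p) (fst (snd p)) (snd (snd p)))"
            by (auto simp: fun_eq_iff)
          ultimately have c1: "continuous_on S (\<lambda>p. h (fst p) (fst (snd p)) (snd (snd p)))" by simp
          have c2: "continuous_on S (\<lambda>p. ps (fst p) (fst (snd p)) (snd (snd p)))"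
            unfolding ps_def psi_def using r0 by (intro continuous_intros) auto
          show ?thesis unfolding F_def using c1 c2 by (intro continuous_on_diff)
        qed
        have compS: "compact S" unfolding S_def by (intro compact_Times compact_Icc compact_cball)
        obtain p1 where p1: "p1 \<in> S" "\<And>p. p \<in> S \<Longrightarrow> F p1 \<le> F p"
          using continuous_attains_inf[OF compS _ contF] x'S by blast
        obtain t1 x1 v1 where p1e: "p1 = (t1, x1, v1)" by (cases p1) auto
        have t1: "0 \<le> t1" "t1 \<le> t" and x1c: "norm (x1 - x0) \<le> Rx" and v1c: "norm (v1 - v0) \<le> r / \<tau>"
          using p1(1) unfolding p1e S_def by (auto simp: dist_norm norm_minus_commute)
        have t1T: "t1 \<in> {0..T}" using t1 tT by auto
        have psx': "\<delta> / 8 < ps t x' v"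
        proof -
          have a: "(x' - x0 - t *\<^sub>R v) \<bullet> (x' - x0 - t *\<^sub>R v) < r\<^sup>2 / 4"
          proof -
            have "(norm (x' - x0 - t *\<^sub>R v))\<^sup>2 < (r/2)\<^sup>2"
              using x'n by (intro power_strict_mono) auto
            then show ?thesis by (simp add: power2_norm_eq_inner power_divide)
          qed
          have b: "\<tau>\<^sup>2 * ((v - v0) \<bullet> (v - v0)) < r\<^sup>2 / 4"
          proof -
            have "\<tau> * norm (v - v0) < r / 2" using tv t0 by (simp add: field_simps)
            then have "(\<tau> * norm (v - v0))\<^sup>2 < (r/2)\<^sup>2"
              using t0 by (intro power_strict_mono) auto
            then show ?thesis by (simp add: power2_norm_eq_inner power_divide power_mult_distrib)
          qed
          have "(x' - x0 - t *\<^sub>R v) \<bullet> (x' - x0 - t *\<^sub>R v) / r\<^sup>2 < 1/4"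
            using a r0 by (simp add: divide_less_eq)
          moreover have "\<tau>\<^sup>2 * ((v - v0) \<bullet> (v - v0)) / r\<^sup>2 < 1/4"
            using b r0 by (simp add: divide_less_eq)
          ultimately have "1/8 < 1 - (x' - x0 - t *\<^sub>R v) \<bullet> (x' - x0 - t *\<^sub>R v) / r\<^sup>2
                - \<tau>\<^sup>2 * ((v - v0) \<bullet> (v - v0)) / r\<^sup>2 - \<kappa> * t"
            using kt by (simp add: mult.commute)
          then have "\<delta> * (1/8) < ps t x' v" unfolding ps_def psi_def
            using d0 by (intro mult_strict_left_mono) auto
          then show ?thesis by simp
        qed
        have Fneg: "F p1 < 0"
        proof -
          have "F (t, x', v) < 0" unfolding F_def using psx' neg hx' by simp
          then show ?thesis using p1(2)[OF x'S] by simp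
        qed
        define Y1 where "Y1 = x1 - x0 - t1 *\<^sub>R v1"
        define W1 where "W1 = v1 - v0"
        have pspos: "0 < ps t1 x1 v1" using Fneg hnn[OF t1T, of x1 v1] unfolding F_def p1e by simp
        have sq: "Y1 \<bullet> Y1 / r\<^sup>2 < 1" "\<tau>\<^sup>2 * (W1 \<bullet> W1) / r\<^sup>2 < 1"
        proof -
          have "0 < 1 - Y1 \<bullet> Y1 / r\<^sup>2 - \<tau>\<^sup>2 * (W1 \<bullet> W1) / r\<^sup>2 - \<kappa> * t1"
            using pspos d0 unfolding ps_def psi_def Y1_def W1_def by (simp add: zero_less_mult_iff)
          moreover have "0 \<le> \<kappa> * t1" using k0 t1 by simp
          moreover have "0 \<le> Y1 \<bullet> Y1 / r\<^sup>2" "0 \<le> \<tau>\<^sup>2 * (W1 \<bullet> W1) / r\<^sup>2" by auto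
          ultimately show "Y1 \<bullet> Y1 / r\<^sup>2 < 1" "\<tau>\<^sup>2 * (W1 \<bullet> W1) / r\<^sup>2 < 1" by linarith+
        qed
        have nY1: "norm Y1 < r"
        proof -
          have "(norm Y1)\<^sup>2 < r\<^sup>2" using sq(1) r0 by (simp add: power2_norm_eq_inner divide_less_eq)
          then show ?thesis using r0 by (simp add: power_less_imp_less_base)
        qed
        have nW1: "norm W1 < r / \<tau>"
        proof -
          have "(\<tau> * norm W1)\<^sup>2 < r\<^sup>2" using sq(2) r0
            by (simp add: power2_norm_eq_inner divide_less_eq power_mult_distrib)
          then have "\<tau> * norm W1 < r" using r0 by (simp add: power_less_imp_less_base)
          then show ?thesis using t0 by (simp add: field_simps)
        qed
        have t1pos: "0 < t1"
        proof (rule ccontr)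
          assume "\<not> 0 < t1"
          then have t10: "t1 = 0" using t1 by simp
          have "torus_dist x1 x0 < r" using td_le[of x1 x0] nY1 t10 unfolding Y1_def by simp
          then have "\<delta> \<le> h 0 x1 v1" using init nW1 unfolding W1_def by auto
          moreover have "ps 0 x1 v1 \<le> \<delta>"
          proof -
            have "0 \<le> (x1 - x0) \<bullet> (x1 - x0) / r\<^sup>2" "0 \<le> \<tau>\<^sup>2 * ((v1 - v0) \<bullet> (v1 - v0)) / r\<^sup>2" by auto
            then have "1 - (x1 - x0) \<bullet> (x1 - x0) / r\<^sup>2 - \<tau>\<^sup>2 * ((v1 - v0) \<bullet> (v1 - v0)) / r\<^sup>2 - \<kappa> * 0 \<le> 1"
              by linarith
            then have "\<delta> * (1 - (x1 - x0) \<bullet> (x1 - x0) / r\<^sup>2 - \<tau>\<^sup>2 * ((v1 - v0) \<bullet> (v1 - v0)) / r\<^sup>2 - \<kappa> * 0) \<le> \<delta> * 1"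
              using d0 by (intro mult_left_mono) auto
            then show ?thesis unfolding ps_def psi_def by simp
          qed
          ultimately have "0 \<le> F p1" unfolding F_def p1e t10 by simp
          then show False using Fneg by simp
        qed
        have t1P: "t1 \<in> {0<..T}" using t1pos t1 tT by auto
        have nv1: "norm v1 \<le> norm v0 + r / \<tau>"
          using norm_triangle_ineq[of v0 "v1 - v0"] nW1 unfolding W1_def by simp
        have x1b: "x1 \<in> ball x0 Rx"
        proof -
          have "x1 - x0 = Y1 + t1 *\<^sub>R v1" unfolding Y1_def by simp
          then have "norm (x1 - x0) \<le> norm Y1 + t1 * norm v1"
            using norm_triangle_ineq[of Y1 "t1 *\<^sub>R v1"] t1 by simp
          also have "\<dots> < r + t * (norm v0 + r / \<tau>)"
            using nY1 nv1 t1 by (intro add_less_le_mono mult_mono) auto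
          finally show ?thesis unfolding Rx_def by (simp add: dist_norm norm_minus_commute)
        qed
        have v1b: "v1 \<in> ball v0 (r / \<tau>)" using nW1 unfolding W1_def by (simp add: dist_norm norm_minus_commute)
        have dt: "((\<lambda>s. h s x1 v1) has_real_derivative ht t1 x1 v1) (at t1 within {0..T})"
          using pde t1P by blast
        have dx: "((\<lambda>y. h t1 y v1) has_derivative (\<lambda>y. gx t1 x1 v1 \<bullet> y)) (at x1)"
          using pde t1P by blast
        have dv: "\<And>w. ((\<lambda>w. h t1 x1 w) has_derivative (\<lambda>u. gv t1 x1 w \<bullet> u)) (at w)"
          using pde t1P by blast
        have dvv: "((\<lambda>w. gv t1 x1 w) has_derivative Hv t1 x1 v1) (at v1)"
          using pde t1P by blast
        have eq: "ht t1 x1 v1 + v1 \<bullet> gx t1 x1 v1 =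
            Rcoef \<beta> h t1 x1 * ((\<Sum>i\<in>UNIV. Hv t1 x1 v1 (axis i 1) $ i) - v1 \<bullet> gv t1 x1 v1)"
          using pde t1P by blast
        have time: "ht t1 x1 v1 \<le> \<delta> * (2 * (Y1 \<bullet> v1) / r\<^sup>2 - \<kappa>)"
        proof -
          have "((\<lambda>s. h s x1 v1 - ps s x1 v1) has_real_derivative
                 ht t1 x1 v1 - \<delta> * (2 * (Y1 \<bullet> v1) / r\<^sup>2 - \<kappa>)) (at t1 within {0..T})"
            unfolding ps_def Y1_def using r0
            by (intro DERIV_diff dt psi_dt) auto
          then have "ht t1 x1 v1 - \<delta> * (2 * (Y1 \<bullet> v1) / r\<^sup>2 - \<kappa>) \<le> 0"
          proof (rule time_min[OF _ t1pos])
            show "t1 \<le> T" using t1P by simp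
            fix s assume "0 \<le> s" "s \<le> t1"
            then have "(s, x1, v1) \<in> S" using p1(1) t1 unfolding p1e S_def by auto
            then show "h t1 x1 v1 - ps t1 x1 v1 \<le> h s x1 v1 - ps s x1 v1"
              using p1(2) unfolding F_def p1e by fastforce
          qed
          then show ?thesis by simp
        qed
        have gxe: "gx t1 x1 v1 = (-2*\<delta>/r\<^sup>2) *\<^sub>R Y1"
        proof -
          have "((\<lambda>y. h t1 y v1 - ps t1 y v1) has_derivative
                 (\<lambda>u. (gx t1 x1 v1 - (-2*\<delta>/r\<^sup>2) *\<^sub>R Y1) \<bullet> u)) (at x1)"
            unfolding ps_def Y1_def 
            by (rule has_derivative_eq_rhs[OF has_derivative_diff[OF dx psi_dx[OF rne]]])
               (use rne in \<open>auto simp: fun_eq_iff inner_diff_left inner_add_left field_simps\<close>)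
          moreover have "eventually (\<lambda>y. h t1 x1 v1 - ps t1 x1 v1 \<le> h t1 y v1 - ps t1 y v1) (nhds x1)"
          proof -
            have "eventually (\<lambda>y. y \<in> ball x0 Rx) (nhds x1)"
              using x1b by (intro eventually_nhds_in_open) auto
            then show ?thesis
            proof (rule eventually_mono)
              fix y assume "y \<in> ball x0 Rx"
              then have "(t1, y, v1) \<in> S" using p1(1) unfolding p1e S_def by auto
              then show "h t1 x1 v1 - ps t1 x1 v1 \<le> h t1 y v1 - ps t1 y v1"
                using p1(2) unfolding F_def p1e by fastforce
            qed
          qed
          ultimately have "gx t1 x1 v1 - (-2*\<delta>/r\<^sup>2) *\<^sub>R Y1 = 0"
            by (rule grad_zero_local_min)
          then show ?thesis by (metis right_minus_eq)
        qed
        define pv where "pv = (\<lambda>w. \<delta> *\<^sub>R ((2 * t1 / r\<^sup>2) *\<^sub>R (x1 - x0 - t1 *\<^sub>R w) - (2 * \<tau>\<^sup>2 / r\<^sup>2) *\<^sub>R (w - v0)))"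
        define Fv where "Fv = (\<lambda>w. h t1 x1 w - ps t1 x1 w)"
        define GF where "GF = (\<lambda>w. gv t1 x1 w - pv w)"
        define cc where "cc = -2*\<delta>*(t1\<^sup>2+\<tau>\<^sup>2)/r\<^sup>2"
        have dFv: "(Fv has_derivative (\<lambda>u. GF w \<bullet> u)) (at w)" for w
          unfolding Fv_def GF_def ps_def pv_def 
          by (rule has_derivative_eq_rhs[OF has_derivative_diff[OF dv psi_dv[OF rne]]])
             (use rne in \<open>auto simp: fun_eq_iff inner_diff_left inner_add_left field_simps\<close>)
        have dGF: "(GF has_derivative (\<lambda>u. Hv t1 x1 v1 u - cc *\<^sub>R u)) (at v1)"
          unfolding GF_def pv_def cc_def
          by (rule has_derivative_diff[OF dvv psi_dvv])
        have mv: "eventually (\<lambda>w. Fv v1 \<le> Fv w) (nhds v1)"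
        proof -
          have "eventually (\<lambda>w. w \<in> ball v0 (r / \<tau>)) (nhds v1)"
            using v1b by (intro eventually_nhds_in_open) auto
          then show ?thesis
          proof (rule eventually_mono)
            fix w assume "w \<in> ball v0 (r / \<tau>)"
            then have "(t1, x1, w) \<in> S" using p1(1) unfolding p1e S_def by auto
            then show "Fv v1 \<le> Fv w"
              using p1(2) unfolding F_def p1e Fv_def by fastforce
          qed
        qed
        have gve: "gv t1 x1 v1 = pv v1"
          using grad_zero_local_min[OF dFv mv] unfolding GF_def by simp
        have hess: "nn * cc \<le> (\<Sum>i\<in>UNIV. Hv t1 x1 v1 (axis i 1) $ i)"
        proof -
          have "0 \<le> (\<Sum>i\<in>UNIV. (Hv t1 x1 v1 (axis i 1) - cc *\<^sub>R axis i 1) $ i)"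
            using hessian_trace_nonneg[OF dFv dGF mv] by (intro sum_nonneg) auto
          also have "\<dots> = (\<Sum>i\<in>UNIV. Hv t1 x1 v1 (axis i 1) $ i) - nn * cc"
            by (simp add: sum_subtractf nn_def)
          finally show ?thesis by simp
        qed
        define R where "R = Rcoef \<beta> h t1 x1"
        have Rb: "0 \<le> R" "R \<le> M"
          using Rcoef_bounds[OF assms(1,2), of h t1 x1 Lam] hnn[OF t1T] hL t1T
          unfolding R_def M_def G_def by auto
        define B where "B = 2*nn*(t1\<^sup>2+\<tau>\<^sup>2)/r\<^sup>2 + (2*t1/r\<^sup>2)*(v1 \<bullet> Y1) - (2*\<tau>\<^sup>2/r\<^sup>2)*(v1 \<bullet> W1)"
        have lhs: "ht t1 x1 v1 + v1 \<bullet> gx t1 x1 v1 \<le> - \<delta> * \<kappa>"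
          using time unfolding gxe by (simp add: inner_commute algebra_simps)
        have inner_pv: "v1 \<bullet> pv v1 = \<delta> * ((2*t1/r\<^sup>2)*(v1 \<bullet> Y1) - (2*\<tau>\<^sup>2/r\<^sup>2)*(v1 \<bullet> W1))"
          unfolding pv_def Y1_def W1_def by (simp only: inner_diff_right inner_scaleR_right right_diff_distrib)
        have "(\<Sum>i\<in>UNIV. Hv t1 x1 v1 (axis i 1) $ i) - v1 \<bullet> gv t1 x1 v1 \<ge> - \<delta> * B"
          using hess unfolding gve inner_pv cc_def B_def by (simp add: algebra_simps)
        then have rhs: "R * ((\<Sum>i\<in>UNIV. Hv t1 x1 v1 (axis i 1) $ i) - v1 \<bullet> gv t1 x1 v1) \<ge> R * (- \<delta> * B)"
          using Rb by (intro mult_left_mono) auto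
        have "\<delta> * \<kappa> \<le> \<delta> * (R * B)" using eq lhs rhs unfolding R_def by (simp add: algebra_simps)
        then have kRB: "\<kappa> \<le> R * B" using d0 by simp
        have BB: "B \<le> B'"
        proof -
          have t1t: "t1 \<le> \<tau>" using t1 tt by simp
          have a1: "2*nn*(t1\<^sup>2+\<tau>\<^sup>2)/r\<^sup>2 \<le> 4*nn*\<tau>\<^sup>2/r\<^sup>2"
          proof -
            have "t1\<^sup>2 \<le> \<tau>\<^sup>2" using t1 t1t by (intro power_mono) auto
            then have "2*nn*(t1\<^sup>2+\<tau>\<^sup>2) \<le> 4*nn*\<tau>\<^sup>2" using nn0 by (simp add: mult_left_mono algebra_simps)
            then show ?thesis using r0 by (simp add: divide_right_mono)
          qed
          have a2: "(2*t1/r\<^sup>2)*(v1 \<bullet> Y1) \<le> 2*\<tau>*norm v1/r"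
          proof -
            have "v1 \<bullet> Y1 \<le> norm v1 * r"
              using norm_cauchy_schwarz[of v1 Y1] nY1 by (smt (verit) mult_left_mono norm_ge_zero)
            then have "(2*t1/r\<^sup>2)*(v1 \<bullet> Y1) \<le> (2*t1/r\<^sup>2)*(norm v1 * r)"
              using t1 r0 by (intro mult_left_mono) auto
            also have "\<dots> \<le> (2*\<tau>/r\<^sup>2)*(norm v1 * r)"
              using t1t r0 by (intro mult_right_mono divide_right_mono) auto
            also have "\<dots> = 2*\<tau>*norm v1/r" using r0 by (simp add: power2_eq_square field_simps)
            finally show ?thesis .
          qed
          have a3: "- (2*\<tau>\<^sup>2/r\<^sup>2)*(v1 \<bullet> W1) \<le> 2*\<tau>*norm v1/r"
          proof -
            have "- (v1 \<bullet> W1) \<le> norm v1 * (r / \<tau>)"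
              using Cauchy_Schwarz_ineq2[of v1 W1] nW1 by (smt (verit) mult_left_mono norm_ge_zero)
            then have "(2*\<tau>\<^sup>2/r\<^sup>2)*(- (v1 \<bullet> W1)) \<le> (2*\<tau>\<^sup>2/r\<^sup>2)*(norm v1 * (r / \<tau>))"
              by (intro mult_left_mono) auto
            also have "\<dots> = 2*\<tau>*norm v1/r" using r0 t0 by (simp add: power2_eq_square field_simps)
            finally show ?thesis by simp
          qed
          have a4: "4*\<tau>*norm v1/r \<le> 4*\<tau>*norm v0/r + 4"
          proof -
            have "4*\<tau>*norm v1 \<le> 4*\<tau>*(norm v0 + r/\<tau>)" using nv1 t0 by (intro mult_left_mono) auto
            also have "\<dots> = 4*\<tau>*norm v0 + 4*r" using t0 by (simp add: field_simps)
            finally have "4*\<tau>*norm v1/r \<le> (4*\<tau>*norm v0 + 4*r)/r" using r0 by (simp add: divide_right_mono)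
            also have "\<dots> = 4*\<tau>*norm v0/r + 4" using r0 by (simp add: field_simps)
            finally show ?thesis .
          qed
          show ?thesis unfolding B_def B'_def using a1 a2 a3 a4 by simp
        qed
        have "R * B \<le> M * B'"
        proof (cases "0 \<le> B")
          case True
          then have "R * B \<le> M * B" using Rb by (intro mult_right_mono) auto
          also have "\<dots> \<le> M * B'" using BB M1 by (intro mult_left_mono) auto
          finally show ?thesis .
        next
          case False
          then have "R * B \<le> 0" using Rb by (simp add: mult_nonneg_nonpos)
          also have "0 \<le> M * B'" using M1 B'0 by simp
          finally show ?thesis .
        qed
        then show False using kRB unfolding \<kappa>_def by simp
      qed
    qed
  qed
qed

end
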